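(* With $\lambda=0$, the ordering $O(n^a,n^b)$ output by the xOrder procedure (defined in the context) maximizes $\mathrm{AUC}^o$ over all cross-group orderings $o$ of $(\mathrm{p}^a,\mathrm{p}^b)$; i.e., it is a global maximizer of $J(o)=\mathrm{AUC}^o-\lambda\Delta\mathrm{xAUC}^o$ for $\lambda=0$.
   Context: Setting: two disjoint finite groups $a,b$ of instances with labels $Y_u\in\{0,1\}$; $n^g,n^g_1,n^g_0$ denote the size, number of positives and number of negatives of group $g$ (all counts $\ge1$); $n_1=n_1^a+n_1^b$, $n_0=n_0^a+n_0^b$, $k_{a,b}=n_1^an_0^b$, $k_{b,a}=n_0^an_1^b$, $k=n_0n_1$. $\mathrm{p}^a=(\mathrm{p}^{a(1)},\dots,\mathrm{p}^{a(n^a)})$ and $\mathrm{p}^b=(\mathrm{p}^{b(1)},\dots,\mathrm{p}^{b(n^b)})$ are fixed orderings of the groups (e.g. by decreasing score). A cross-group ordering is a list of all instances of $a\cup b$ preserving the relative orders within $\mathrm{p}^a$ and within $\mathrm{p}^b$; "precedes" means ranked higher. $\mathrm{AUC}^o=\frac{1}{n_1n_0}\#\{(u,v):Y_u=1,Y_v=0,u\text{ precedes }v\text{ in }o\}$; $\mathrm{xAUC}^o(a,b)=\frac{1}{n_1^an_0^b}\#\{(u,v):u\in a,Y_u=1,v\in b,Y_v=0,u\text{ precedes }v\}$, $\mathrm{xAUC}^o(b,a)$ symmetrically; $\Delta\mathrm{xAUC}^o=|\mathrm{xAUC}^o(a,b)-\mathrm{xAUC}^o(b,a)|$. xOrder: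 For $0\le i\le n^a$, $0\le j\le n^b$ and a list $q$ that interleaves $\mathrm{p}^{a(1)},\dots,\mathrm{p}^{a(i)}$ and $\mathrm{p}^{b(1)},\dots,\mathrm{p}^{b(j)}$ preserving within-group orders, let $q^{\to b}$ be $q$ followed by $\mathrm{p}^{b(j+1)},\dots,\mathrm{p}^{b(n^b)}$ and $q^{\to a}$ be $q$ followed by $\mathrm{p}^{a(i+1)},\dots,\mathrm{p}^{a(n^a)}$. Define $A(q)=\frac{1}{n_1^an_0^b}\#\{(u,v): u\in\{\mathrm{p}^{a(1)},..,\mathrm{p}^{a(i)}\},Y_u=1,v\in b,Y_v=0,u\text{ precedes }v\text{ in }q^{\to b}\}$, $B(q)=\frac{1}{n_1^bn_0^a}\#\{(u,v): u\in\{\mathrm{p}^{b(1)},..,\mathrm{p}^{b(j)}\},Y_u=1,v\in a,Y_v=0,u\text{ precedes }v\text{ in }q^{\to a}\}$, and $\widehat G(q)=\frac{k_{a,b}}{k}A(q)+\frac{k_{b,a}}{k}B(q)-\lambda|A(q)-B(q)|$. Set $O(i,0)=(\mathrm{p}^{a(1)},\dots,\mathrm{p}^{a(i)})$ and $O(0,j)=(\mathrm{p}^{b(1)},\dots,\mathrm{p}^{b(j)})$. For $i=1,\dots,n^a$ and $j=1,\dots,n^b$ (in increasing order): if $\widehat G(O(i-1,j)\oplus\mathrm{p}^{a(i)})>\widehat G(O(i,j-1)\oplus\mathrm{p}^{b(j)})$ then $O(i,j)=O(i-1,j)\oplus\mathrm{p}^{a(i)}$, otherwise $O(i,j)=O(i,j-1)\oplus\mathrm{p}^{b(j)}$,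 where $\oplus$ appends an element to the end of a list. The output is $O(n^a,n^b)$, a cross-group ordering. *)

theory Defs
  imports Main "HOL.Real"
begin

text \<open>Instances have an abstract type 'a; the two groups are given by their fixed
orderings pa and pb (lists, highest rank first); labels by Y :: 'a => bool (True = positive).\<close>

definition precedes :: "'a list \<Rightarrow> 'a \<Rightarrow> 'a \<Rightarrow> bool" where
  "precedes ord u v \<longleftrightarrow> (\<exists>i j. i < j \<and> j < length ord \<and> ord ! i = u \<and> ord ! j = v)"

definition npos :: "('a \<Rightarrow> bool) \<Rightarrow> 'a list \<Rightarrow> nat" where
  "npos Y p = card {u \<in> set p. Y u}"

definition nneg :: "('a \<Rightarrow> bool) \<Rightarrow> 'a list \<Rightarrow> nat" where
  "nneg Y p = card {u \<in> set p. \<not> Y u}"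

definition cnt :: "('a \<Rightarrow> bool) \<Rightarrow> 'a set \<Rightarrow> 'a set \<Rightarrow> 'a list \<Rightarrow> nat" where
  "cnt Y S T ord = card {(u, v). u \<in> S \<and> Y u \<and> v \<in> T \<and> \<not> Y v \<and> precedes ord u v}"

definition AUC :: "('a \<Rightarrow> bool) \<Rightarrow> 'a list \<Rightarrow> 'a list \<Rightarrow> 'a list \<Rightarrow> real" where
  "AUC Y pa pb ord =
     real (cnt Y (set pa \<union> set pb) (set pa \<union> set pb) ord) /
     (real (npos Y pa + npos Y pb) * real (nneg Y pa + nneg Y pb))"

definition xAUC :: "('a \<Rightarrow> bool) \<Rightarrow> 'a list \<Rightarrow> 'a list \<Rightarrow> 'a list \<Rightarrow> real" where
  "xAUC Y pa pb ord = real (cnt Y (set pa) (set pb) ord) / (real (npos Y pa) * real (nneg Y pb))"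

definition DeltaxAUC :: "('a \<Rightarrow> bool) \<Rightarrow> 'a list \<Rightarrow> 'a list \<Rightarrow> 'a list \<Rightarrow> real" where
  "DeltaxAUC Y pa pb ord = \<bar>xAUC Y pa pb ord - xAUC Y pb pa ord\<bar>"

definition J :: "real \<Rightarrow> ('a \<Rightarrow> bool) \<Rightarrow> 'a list \<Rightarrow> 'a list \<Rightarrow> 'a list \<Rightarrow> real" where
  "J lam Y pa pb ord = AUC Y pa pb ord - lam * DeltaxAUC Y pa pb ord"

text \<open>A(q), B(q) for a partial list q interleaving the first i elements of pa and first j of pb.\<close>
definition Apart :: "('a \<Rightarrow> bool) \<Rightarrow> 'a list \<Rightarrow> 'a list \<Rightarrow> nat \<Rightarrow> nat \<Rightarrow> 'a list \<Rightarrow> real" where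
  "Apart Y pa pb i j q =
     real (cnt Y (set (take i pa)) (set pb) (q @ drop j pb)) / (real (npos Y pa) * real (nneg Y pb))"

definition Bpart :: "('a \<Rightarrow> bool) \<Rightarrow> 'a list \<Rightarrow> 'a list \<Rightarrow> nat \<Rightarrow> nat \<Rightarrow> 'a list \<Rightarrow> real" where
  "Bpart Y pa pb i j q =
     real (cnt Y (set (take j pb)) (set pa) (q @ drop i pa)) / (real (npos Y pb) * real (nneg Y pa))"

definition Ghat :: "real \<Rightarrow> ('a \<Rightarrow> bool) \<Rightarrow> 'a list \<Rightarrow> 'a list \<Rightarrow> nat \<Rightarrow> nat \<Rightarrow> 'a list \<Rightarrow> real" where
  "Ghat lam Y pa pb i j q =
     (let kab = real (npos Y pa * nneg Y pb);
          kba = real (nneg Y pa * npos Y pb);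
          k = real ((nneg Y pa + nneg Y pb) * (npos Y pa + npos Y pb));
          A = Apart Y pa pb i j q; B = Bpart Y pa pb i j q
      in kab / k * A + kba / k * B - lam * \<bar>A - B\<bar>)"

text \<open>xOrder table O(i,j); p^{a(i)} is pa ! (i - 1).\<close>
fun xO :: "real \<Rightarrow> ('a \<Rightarrow> bool) \<Rightarrow> 'a list \<Rightarrow> 'a list \<Rightarrow> nat \<Rightarrow> nat \<Rightarrow> 'a list" where
  "xO lam Y pa pb 0 j = take j pb"
| "xO lam Y pa pb (Suc i) 0 = take (Suc i) pa"
| "xO lam Y pa pb (Suc i) (Suc j) =
     (let qa = xO lam Y pa pb i (Suc j) @ [pa ! i];
          qb = xO lam Y pa pb (Suc i) j @ [pb ! j]
      in if Ghat lam Y pa pb (Suc i) (Suc j) qa > Ghat lam Y pa pb (Suc i) (Suc j) qb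
         then qa else qb)"

definition xOrder :: "real \<Rightarrow> ('a \<Rightarrow> bool) \<Rightarrow> 'a list \<Rightarrow> 'a list \<Rightarrow> 'a list" where
  "xOrder lam Y pa pb = xO lam Y pa pb (length pa) (length pb)"

end

theory Submission imports Defs begin

lemma precedes_Nil[simp]: "\<not> precedes [] u v"
  by (simp add: precedes_def)

lemma precedes_Cons: "precedes (x#q) u v \<longleftrightarrow> (x = u \<and> v \<in> set q) \<or> precedes q u v"
proof
  assume "precedes (x#q) u v"
  then obtain i j where h: "i < j" "j < Suc (length q)" "(x#q)!i = u" "(x#q)!j = v"
    by (auto simp: precedes_def)
  show "(x = u \<and> v \<in> set q) \<or> precedes q u v"
  proof (cases i)
    case 0
    then obtain j' where "j = Suc j'" using h by (cases j) auto
    then show ?thesis using h 0 by auto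
  next
    case (Suc i')
    then obtain j' where "j = Suc j'" using h by (cases j) auto
    then show ?thesis using h Suc unfolding precedes_def by auto
  qed
next
  assume "(x = u \<and> v \<in> set q) \<or> precedes q u v"
  then show "precedes (x#q) u v"
  proof
    assume "x = u \<and> v \<in> set q"
    then obtain j where "j < length q" "q!j = v" by (auto simp: in_set_conv_nth)
    then show ?thesis unfolding precedes_def using \<open>x = u \<and> v \<in> set q\<close>
      by (intro exI[of _ 0] exI[of _ "Suc j"]) auto
  next
    assume "precedes q u v"
    then obtain i j where "i < j" "j < length q" "q!i = u" "q!j = v" by (auto simp: precedes_def)
    then show ?thesis unfolding precedes_def
      by (intro exI[of _ "Suc i"] exI[of _ "Suc j"]) auto
  qed
qed

lemma precedes_append: "precedes (q@r) u v \<longleftrightarrow> precedes q u v \<or> precedes r u v \<or> (u \<in> set q \<and> v \<in> set r)"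
  by (induction q) (auto simp: precedes_Cons)

lemma precedes_set: "precedes q u v \<Longrightarrow> u \<in> set q \<and> v \<in> set q"
  by (induction q) (auto simp: precedes_Cons)

lemma precedes_filter: "P u \<Longrightarrow> P v \<Longrightarrow> precedes (filter P q) u v \<longleftrightarrow> precedes q u v"
  by (induction q) (auto simp: precedes_Cons)

lemma cnt_finite: "finite {(u, v). u \<in> S \<and> Y u \<and> v \<in> T \<and> \<not> Y v \<and> precedes ord u v}"
  by (rule finite_subset[of _ "set ord \<times> set ord"]) (auto dest: precedes_set)

lemma cnt_cong:
  assumes "\<And>u v. Y u \<Longrightarrow> \<not> Y v \<Longrightarrow> (u \<in> S \<and> v \<in> T \<and> precedes o1 u v) \<longleftrightarrow> (u \<in> S' \<and> v \<in> T' \<and> precedes o2 u v)"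
  shows "cnt Y S T o1 = cnt Y S' T' o2"
  unfolding cnt_def by (rule arg_cong[where f=card]) (use assms in blast)

lemma cnt_append:
  assumes "set q \<inter> set r = {}"
  shows "cnt Y S T (q@r) = cnt Y S T q + cnt Y S T r
     + card {u \<in> set q. u \<in> S \<and> Y u} * card {v \<in> set r. v \<in> T \<and> \<not> Y v}"
proof -
  let ?A = "{(u, v). u \<in> S \<and> Y u \<and> v \<in> T \<and> \<not> Y v \<and> precedes q u v}"
  let ?B = "{(u, v). u \<in> S \<and> Y u \<and> v \<in> T \<and> \<not> Y v \<and> precedes r u v}"
  let ?C = "{u \<in> set q. u \<in> S \<and> Y u} \<times> {v \<in> set r. v \<in> T \<and> \<not> Y v}"
  have e: "{(u, v). u \<in> S \<and> Y u \<and> v \<in> T \<and> \<not> Y v \<and> precedes (q@r) u v} = (?A \<union> ?B) \<union> ?C"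
    by (auto simp: precedes_append)
  have d1: "?A \<inter> ?B = {}" using assms by (auto dest: precedes_set)
  have d2: "(?A \<union> ?B) \<inter> ?C = {}" using assms by (auto dest: precedes_set)
  have "card ((?A \<union> ?B) \<union> ?C) = card ?A + card ?B + card ?C"
    using d1 d2 cnt_finite[of S Y T q] cnt_finite[of S Y T r]
    by (simp add: card_Un_disjoint)
  then show ?thesis unfolding cnt_def e by (simp add: card_cartesian_product)
qed

lemma cnt_single[simp]: "cnt Y S T [x] = 0"
  unfolding cnt_def by (simp add: precedes_Cons)

lemma cnt_Un_left: "S1 \<inter> S2 = {} \<Longrightarrow> cnt Y (S1 \<union> S2) T o1 = cnt Y S1 T o1 + cnt Y S2 T o1"
proof -
  assume d: "S1 \<inter> S2 = {}"
  have "card ({(u, v). u \<in> S1 \<and> Y u \<and> v \<in> T \<and> \<not> Y v \<and> precedes o1 u v} \<union> {(u, v). u \<in> S2 \<and> Y u \<and> v \<in> T \<and> \<not> Y v \<and> precedes o1 u v}) = card {(u, v). u \<in> S1 \<and> Y u \<and> v \<in> T \<and> \<not> Y v \<and> precedes o1 u v} + card {(u, v). u \<in> S2 \<and> Y u \<and> v \<in> T \<and> \<not> Y v \<and> precedes o1 u v}"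
    using d cnt_finite[of S1 Y T o1] cnt_finite[of S2 Y T o1] by (intro card_Un_disjoint) auto
  moreover have "{(u, v). u \<in> S1 \<and> Y u \<and> v \<in> T \<and> \<not> Y v \<and> precedes o1 u v} \<union> {(u, v). u \<in> S2 \<and> Y u \<and> v \<in> T \<and> \<not> Y v \<and> precedes o1 u v} = {(u, v). u \<in> S1 \<union> S2 \<and> Y u \<and> v \<in> T \<and> \<not> Y v \<and> precedes o1 u v}" by auto
  ultimately show ?thesis unfolding cnt_def by simp
qed

lemma cnt_Un_right: "T1 \<inter> T2 = {} \<Longrightarrow> cnt Y S (T1 \<union> T2) o1 = cnt Y S T1 o1 + cnt Y S T2 o1"
proof -
  assume d: "T1 \<inter> T2 = {}"
  have "card ({(u, v). u \<in> S \<and> Y u \<and> v \<in> T1 \<and> \<not> Y v \<and> precedes o1 u v} \<union> {(u, v). u \<in> S \<and> Y u \<and> v \<in> T2 \<and> \<not> Y v \<and> precedes o1 u v}) = card {(u, v). u \<in> S \<and> Y u \<and> v \<in> T1 \<and> \<not> Y v \<and> precedes o1 u v} + card {(u, v). u \<in> S \<and> Y u \<and> v \<in> T2 \<and> \<not> Y v \<and> precedes o1 u v}"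
    using d cnt_finite[of S Y T1 o1] cnt_finite[of S Y T2 o1] by (intro card_Un_disjoint) auto
  moreover have "{(u, v). u \<in> S \<and> Y u \<and> v \<in> T1 \<and> \<not> Y v \<and> precedes o1 u v} \<union> {(u, v). u \<in> S \<and> Y u \<and> v \<in> T2 \<and> \<not> Y v \<and> precedes o1 u v} = {(u, v). u \<in> S \<and> Y u \<and> v \<in> T1 \<union> T2 \<and> \<not> Y v \<and> precedes o1 u v}" by auto
  ultimately show ?thesis unfolding cnt_def by simp
qed

lemma snoc_shuffles: "zs @ [z] \<in> shuffles xs ys \<Longrightarrow>
  (\<exists>xs'. xs = xs'@[z] \<and> zs \<in> shuffles xs' ys) \<or> (\<exists>ys'. ys = ys'@[z] \<and> zs \<in> shuffles xs ys')"
proof (induction zs arbitrary: xs ys)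
  case Nil
  then show ?case by (cases xs; cases ys) (auto simp: Cons_in_shuffles_iff)
next
  case (Cons a zs)
  from Cons.prems have "(xs \<noteq> [] \<and> hd xs = a \<and> zs @ [z] \<in> shuffles (tl xs) ys \<or>
     ys \<noteq> [] \<and> hd ys = a \<and> zs @ [z] \<in> shuffles xs (tl ys))"
    by (simp add: Cons_in_shuffles_iff)
  then show ?case
  proof
    assume h: "xs \<noteq> [] \<and> hd xs = a \<and> zs @ [z] \<in> shuffles (tl xs) ys"
    then have xs: "xs = a # tl xs" by auto
    from Cons.IH[of "tl xs" ys] h have "(\<exists>xs'. tl xs = xs' @ [z] \<and> zs \<in> shuffles xs' ys) \<or>
     (\<exists>ys'. ys = ys' @ [z] \<and> zs \<in> shuffles (tl xs) ys')" by blast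
    then show ?thesis
      apply (elim disjE exE)
      subgoal for xs' by (rule disjI1, rule exI[of _ "a#xs'"]) (metis Cons_in_shuffles_leftI xs append_Cons)
      subgoal for ys' by (rule disjI2, rule exI[of _ ys']) (metis Cons_in_shuffles_leftI xs)
      done
  next
    assume h: "ys \<noteq> [] \<and> hd ys = a \<and> zs @ [z] \<in> shuffles xs (tl ys)"
    then have ys: "ys = a # tl ys" by auto
    from Cons.IH[of xs "tl ys"] h have "(\<exists>xs'. xs = xs' @ [z] \<and> zs \<in> shuffles xs' (tl ys)) \<or>
     (\<exists>ys'. tl ys = ys' @ [z] \<and> zs \<in> shuffles xs ys')" by blast
    then show ?thesis
      apply (elim disjE exE)
      subgoal for xs' by (rule disjI1, rule exI[of _ xs']) (metis Cons_in_shuffles_rightI ys)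
      subgoal for ys' by (rule disjI2, rule exI[of _ "a#ys'"]) (metis Cons_in_shuffles_rightI ys append_Cons)
      done
  qed
qed

lemma snoc_in_shuffles_left: "zs \<in> shuffles xs ys \<Longrightarrow> zs @ [z] \<in> shuffles (xs@[z]) ys"
proof (induction zs arbitrary: xs ys)
  case Nil
  then show ?case by simp
next
  case (Cons a zs)
  then have "(xs \<noteq> [] \<and> hd xs = a \<and> zs \<in> shuffles (tl xs) ys \<or>
     ys \<noteq> [] \<and> hd ys = a \<and> zs \<in> shuffles xs (tl ys))"
    by (simp add: Cons_in_shuffles_iff)
  then show ?case
  proof
    assume h: "xs \<noteq> [] \<and> hd xs = a \<and> zs \<in> shuffles (tl xs) ys"
    then have "xs = a # tl xs" by auto
    then show ?thesis using Cons.IH h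
      by (metis Cons_in_shuffles_leftI append_Cons)
  next
    assume h: "ys \<noteq> [] \<and> hd ys = a \<and> zs \<in> shuffles xs (tl ys)"
    then have "ys = a # tl ys" by auto
    then show ?thesis using Cons.IH h
      by (metis Cons_in_shuffles_rightI append_Cons)
  qed
qed

lemma snoc_in_shuffles_right: "zs \<in> shuffles xs ys \<Longrightarrow> zs @ [z] \<in> shuffles xs (ys@[z])"
  using snoc_in_shuffles_left[of zs ys xs z] by (simp add: shuffles_commutes)

lemma shuffles_snoc_snoc_E:
  assumes "zs \<in> shuffles (xs@[x]) (ys@[y])"
  shows "(\<exists>zs'. zs = zs'@[x] \<and> zs' \<in> shuffles xs (ys@[y])) \<or> (\<exists>zs'. zs = zs'@[y] \<and> zs' \<in> shuffles (xs@[x]) ys)"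
proof -
  have "zs \<noteq> []" using assms by auto
  then have e: "zs = butlast zs @ [last zs]" by simp
  from snoc_shuffles[of "butlast zs" "last zs" "xs@[x]" "ys@[y]"] assms e
  show ?thesis by (metis append1_eq_conv)
qed


lemma alg_G: "(a::real) \<noteq> 0 \<Longrightarrow> b \<noteq> 0 \<Longrightarrow> d \<noteq> 0 \<Longrightarrow> c \<noteq> 0 \<Longrightarrow> K \<noteq> 0 \<Longrightarrow>
  a*b/K * (x/(a*b)) + c*d/K*(y/(d*c)) - 0 * \<bar>x/(a*b) - y/(d*c)\<bar> = (x+y)/K"
  by (simp add: field_simps)

definition Xc :: "('a \<Rightarrow> bool) \<Rightarrow> 'a list \<Rightarrow> 'a list \<Rightarrow> 'a list \<Rightarrow> nat" where
  "Xc Y pa pb q = cnt Y (set pa) (set pb) q + cnt Y (set pb) (set pa) q"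

context
  fixes pa pb :: "'a list" and Y :: "'a \<Rightarrow> bool"
  assumes dA: "distinct pa" and dB: "distinct pb" and disj: "set pa \<inter> set pb = {}"
    and pA: "npos Y pa \<ge> 1" and nA: "nneg Y pa \<ge> 1" and pB: "npos Y pb \<ge> 1" and nB: "nneg Y pb \<ge> 1"
begin

lemma set_sh: "q \<in> shuffles (take i pa) (take j pb) \<Longrightarrow> set q = set (take i pa) \<union> set (take j pb)"
  by (rule set_shuffles)

lemma numA:
  assumes q: "q \<in> shuffles (take i pa) (take j pb)"
  shows "cnt Y (set (take i pa)) (set pb) (q @ drop j pb) = cnt Y (set pa) (set pb) q
     + card {u \<in> set q. u \<in> set (take i pa) \<and> Y u} * card {v \<in> set (drop j pb). v \<in> set pb \<and> \<not> Y v}"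
proof -
  have sq: "set q = set (take i pa) \<union> set (take j pb)" using set_sh[OF q] .
  have d: "set q \<inter> set (drop j pb) = {}"
    using sq disj set_take_disj_set_drop_if_distinct[OF dB, of j j]
    by (auto dest: in_set_takeD in_set_dropD)
  have z: "cnt Y (set (take i pa)) (set pb) (drop j pb) = 0"
  proof -
    have "{(u, v). u \<in> set (take i pa) \<and> Y u \<and> v \<in> set pb \<and> \<not> Y v \<and> precedes (drop j pb) u v} = {}"
      using disj by (auto dest!: precedes_set in_set_takeD in_set_dropD)
    then show ?thesis unfolding cnt_def by (metis card.empty)
  qed
  have c: "cnt Y (set (take i pa)) (set pb) q = cnt Y (set pa) (set pb) q"
    by (rule cnt_cong) (use sq disj in \<open>auto dest: precedes_set in_set_takeD\<close>)
  show ?thesis using cnt_append[OF d, of Y "set (take i pa)" "set pb"] z c by simp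
qed

lemma numB:
  assumes q: "q \<in> shuffles (take i pa) (take j pb)"
  shows "cnt Y (set (take j pb)) (set pa) (q @ drop i pa) = cnt Y (set pb) (set pa) q
     + card {u \<in> set q. u \<in> set (take j pb) \<and> Y u} * card {v \<in> set (drop i pa). v \<in> set pa \<and> \<not> Y v}"
proof -
  have sq: "set q = set (take i pa) \<union> set (take j pb)" using set_sh[OF q] .
  have d: "set q \<inter> set (drop i pa) = {}"
    using sq disj set_take_disj_set_drop_if_distinct[OF dA, of i i]
    by (auto dest: in_set_takeD in_set_dropD)
  have z: "cnt Y (set (take j pb)) (set pa) (drop i pa) = 0"
  proof -
    have "{(u, v). u \<in> set (take j pb) \<and> Y u \<and> v \<in> set pa \<and> \<not> Y v \<and> precedes (drop i pa) u v} = {}"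
      using disj by (auto dest!: precedes_set in_set_takeD in_set_dropD)
    then show ?thesis unfolding cnt_def by (metis card.empty)
  qed
  have c: "cnt Y (set (take j pb)) (set pa) q = cnt Y (set pb) (set pa) q"
    by (rule cnt_cong) (use sq disj in \<open>auto dest: precedes_set in_set_takeD\<close>)
  show ?thesis using cnt_append[OF d, of Y "set (take j pb)" "set pa"] z c by simp
qed

definition "KK = real ((nneg Y pa + nneg Y pb) * (npos Y pa + npos Y pb))"

lemma KK_pos: "KK > 0" unfolding KK_def using pA nA pB nB by simp

lemma Ghat_eq:
  assumes q: "q \<in> shuffles (take i pa) (take j pb)"
  shows "Ghat 0 Y pa pb i j q = (real (Xc Y pa pb q)
     + real (card {u \<in> set q. u \<in> set (take i pa) \<and> Y u} * card {v \<in> set (drop j pb). v \<in> set pb \<and> \<not> Y v})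
     + real (card {u \<in> set q. u \<in> set (take j pb) \<and> Y u} * card {v \<in> set (drop i pa). v \<in> set pa \<and> \<not> Y v})) / KK"
proof -
  have a: "real (npos Y pa) \<noteq> 0" "real (nneg Y pb) \<noteq> 0" "real (npos Y pb) \<noteq> 0" "real (nneg Y pa) \<noteq> 0"
    using pA nB pB nA by auto
  have k: "KK \<noteq> 0" using KK_pos by simp
  have "Ghat 0 Y pa pb i j q = (real (cnt Y (set (take i pa)) (set pb) (q @ drop j pb))
     + real (cnt Y (set (take j pb)) (set pa) (q @ drop i pa))) / KK"
    unfolding Ghat_def Let_def Apart_def Bpart_def KK_def[symmetric]
    unfolding of_nat_mult by (rule alg_G[OF a k])
  then show ?thesis unfolding numA[OF q] numB[OF q] Xc_def by simp
qed

lemma Ghat_less: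
  assumes q1: "q1 \<in> shuffles (take i pa) (take j pb)" and q2: "q2 \<in> shuffles (take i pa) (take j pb)"
  shows "Ghat 0 Y pa pb i j q1 < Ghat 0 Y pa pb i j q2 \<longleftrightarrow> Xc Y pa pb q1 < Xc Y pa pb q2"
proof -
  have "set q1 = set q2" using set_sh[OF q1] set_sh[OF q2] by simp
  then show ?thesis unfolding Ghat_eq[OF q1] Ghat_eq[OF q2] using KK_pos
    by (simp add: divide_less_cancel)
qed

lemma Xc_snoc:
  assumes "x \<notin> set q"
  shows "Xc Y pa pb (q @ [x]) = Xc Y pa pb q
    + card {u \<in> set q. u \<in> set pa \<and> Y u} * card {v \<in> set [x]. v \<in> set pb \<and> \<not> Y v}
    + card {u \<in> set q. u \<in> set pb \<and> Y u} * card {v \<in> set [x]. v \<in> set pa \<and> \<not> Y v}"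
proof -
  have d: "set q \<inter> set [x] = {}" using assms by auto
  show ?thesis unfolding Xc_def cnt_append[OF d] by simp
qed

lemma DP:
  "i \<le> length pa \<Longrightarrow> j \<le> length pb \<Longrightarrow>
   xO 0 Y pa pb i j \<in> shuffles (take i pa) (take j pb) \<and>
   (\<forall>q \<in> shuffles (take i pa) (take j pb). Xc Y pa pb q \<le> Xc Y pa pb (xO 0 Y pa pb i j))"
proof (induction "i + j" arbitrary: i j rule: less_induct)
  case less
  show ?case
  proof (cases i)
    case 0
    then show ?thesis by simp
  next
    case (Suc i')
    show ?thesis
    proof (cases j)
      case 0
      then show ?thesis using Suc by simp
    next
      case (Suc j')
      note I = \<open>i = Suc i'\<close>
      have il: "i' < length pa" and jl: "j' < length pb" using less.prems I Suc by auto
      let ?Sa = "shuffles (take i' pa) (take (Suc j') pb)"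
      let ?Sb = "shuffles (take (Suc i') pa) (take j' pb)"
      let ?S = "shuffles (take (Suc i') pa) (take (Suc j') pb)"
      let ?ra = "xO 0 Y pa pb i' (Suc j')"
      let ?rb = "xO 0 Y pa pb (Suc i') j'"
      let ?qa = "?ra @ [pa ! i']"
      let ?qb = "?rb @ [pb ! j']"
      have IHa: "?ra \<in> ?Sa \<and> (\<forall>q\<in>?Sa. Xc Y pa pb q \<le> Xc Y pa pb ?ra)"
        using less.hyps[of i' "Suc j'"] less.prems I Suc by auto
      have IHb: "?rb \<in> ?Sb \<and> (\<forall>q\<in>?Sb. Xc Y pa pb q \<le> Xc Y pa pb ?rb)"
        using less.hyps[of "Suc i'" j'] less.prems I Suc by auto
      have ta: "take (Suc i') pa = take i' pa @ [pa ! i']" using il by (simp add: take_Suc_conv_app_nth)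
      have tb: "take (Suc j') pb = take j' pb @ [pb ! j']" using jl by (simp add: take_Suc_conv_app_nth)
      have qaS: "?qa \<in> ?S" unfolding ta by (rule snoc_in_shuffles_left[OF conjunct1[OF IHa]])
      have qbS: "?qb \<in> ?S" unfolding tb by (rule snoc_in_shuffles_right[OF conjunct1[OF IHb]])
      have naA: "pa ! i' \<notin> set (take i' pa)"
        using distinct_take[OF dA, of "Suc i'"] unfolding ta by simp
      have naB: "pa ! i' \<notin> set pb" using disj nth_mem[OF il] by blast
      have nbB: "pb ! j' \<notin> set (take j' pb)"
        using distinct_take[OF dB, of "Suc j'"] unfolding tb by simp
      have nbA: "pb ! j' \<notin> set pa" using disj nth_mem[OF jl] by blast
      have boundA: "Xc Y pa pb q \<le> Xc Y pa pb ?qa" if "q \<in> ?Sa" for q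
      proof -
        have e: "set q = set ?ra" using set_sh[OF that] set_sh[OF conjunct1[OF IHa]] by simp
        have n1: "pa ! i' \<notin> set q" using set_sh[OF that] naA naB by (auto dest: in_set_takeD)
        have n2: "pa ! i' \<notin> set ?ra" using n1 e by simp
        have "Xc Y pa pb q \<le> Xc Y pa pb ?ra" using IHa that by blast
        then show ?thesis unfolding Xc_snoc[OF n1] Xc_snoc[OF n2] e by simp
      qed
      have boundB: "Xc Y pa pb q \<le> Xc Y pa pb ?qb" if "q \<in> ?Sb" for q
      proof -
        have e: "set q = set ?rb" using set_sh[OF that] set_sh[OF conjunct1[OF IHb]] by simp
        have n1: "pb ! j' \<notin> set q" using set_sh[OF that] nbA nbB by (auto dest: in_set_takeD)
        have n2: "pb ! j' \<notin> set ?rb" using n1 e by simp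
        have "Xc Y pa pb q \<le> Xc Y pa pb ?rb" using IHb that by blast
        then show ?thesis unfolding Xc_snoc[OF n1] Xc_snoc[OF n2] e by simp
      qed
      have xo: "xO 0 Y pa pb i j = (if Ghat 0 Y pa pb (Suc i') (Suc j') ?qa > Ghat 0 Y pa pb (Suc i') (Suc j') ?qb
         then ?qa else ?qb)" unfolding I Suc by (simp add: Let_def)
      have mx: "Xc Y pa pb ?qa \<le> Xc Y pa pb (xO 0 Y pa pb i j) \<and> Xc Y pa pb ?qb \<le> Xc Y pa pb (xO 0 Y pa pb i j)"
        using Ghat_less[OF qaS qbS] Ghat_less[OF qbS qaS] unfolding xo by auto
      have mem: "xO 0 Y pa pb i j \<in> ?S" unfolding xo using qaS qbS by simp
      have opt: "Xc Y pa pb q \<le> Xc Y pa pb (xO 0 Y pa pb i j)" if "q \<in> ?S" for q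
      proof -
        have q': "q \<in> shuffles (take i' pa @ [pa ! i']) (take j' pb @ [pb ! j'])"
          using that unfolding ta tb .
        have "(\<exists>zs'. q = zs'@[pa ! i'] \<and> zs' \<in> ?Sa) \<or> (\<exists>zs'. q = zs'@[pb ! j'] \<and> zs' \<in> ?Sb)"
          using shuffles_snoc_snoc_E[OF q'] unfolding ta[symmetric] tb[symmetric] .
        then show ?thesis
        proof (elim disjE exE conjE)
          fix zs' assume h: "q = zs'@[pa ! i']" "zs' \<in> ?Sa"
          have n1: "pa ! i' \<notin> set zs'" using set_sh[OF h(2)] naA naB by (auto dest: in_set_takeD)
          have "Xc Y pa pb q \<le> Xc Y pa pb ?qa"
          proof -
            have e: "set zs' = set ?ra" using set_sh[OF h(2)] set_sh[OF conjunct1[OF IHa]] by simp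
            have n2: "pa ! i' \<notin> set ?ra" using n1 e by simp
            have "Xc Y pa pb zs' \<le> Xc Y pa pb ?ra" using IHa h(2) by blast
            then show ?thesis unfolding h(1) Xc_snoc[OF n1] Xc_snoc[OF n2] e by simp
          qed
          then show ?thesis using mx by linarith
        next
          fix zs' assume h: "q = zs'@[pb ! j']" "zs' \<in> ?Sb"
          have n1: "pb ! j' \<notin> set zs'" using set_sh[OF h(2)] nbA nbB by (auto dest: in_set_takeD)
          have "Xc Y pa pb q \<le> Xc Y pa pb ?qb"
          proof -
            have e: "set zs' = set ?rb" using set_sh[OF h(2)] set_sh[OF conjunct1[OF IHb]] by simp
            have n2: "pb ! j' \<notin> set ?rb" using n1 e by simp
            have "Xc Y pa pb zs' \<le> Xc Y pa pb ?rb" using IHb h(2) by blast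
            then show ?thesis unfolding h(1) Xc_snoc[OF n1] Xc_snoc[OF n2] e by simp
          qed
          then show ?thesis using mx by linarith
        qed
      qed
      show ?thesis using mem opt unfolding I[symmetric] Suc[symmetric] by blast
    qed
  qed
qed

lemma cnt_total:
  assumes o: "ord \<in> shuffles pa pb"
  shows "cnt Y (set pa \<union> set pb) (set pa \<union> set pb) ord
     = Xc Y pa pb ord + cnt Y (set pa) (set pa) pa + cnt Y (set pb) (set pb) pb"
proof -
  have fa: "filter (\<lambda>x. x \<in> set pa) ord = pa" using filter_shuffles_disjoint1(1)[OF disj o] .
  have fb: "filter (\<lambda>x. x \<notin> set pa) ord = pb" using filter_shuffles_disjoint1(2)[OF disj o] .
  have ca: "cnt Y (set pa) (set pa) ord = cnt Y (set pa) (set pa) pa"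
  proof -
    have "cnt Y (set pa) (set pa) ord = cnt Y (set pa) (set pa) (filter (\<lambda>x. x \<in> set pa) ord)"
      by (rule cnt_cong) (auto simp: precedes_filter)
    then show ?thesis unfolding fa .
  qed
  have cb: "cnt Y (set pb) (set pb) ord = cnt Y (set pb) (set pb) pb"
  proof -
    have "cnt Y (set pb) (set pb) ord = cnt Y (set pb) (set pb) (filter (\<lambda>x. x \<notin> set pa) ord)"
      proof (rule cnt_cong)
      fix u v
      show "(u \<in> set pb \<and> v \<in> set pb \<and> precedes ord u v) \<longleftrightarrow>
            (u \<in> set pb \<and> v \<in> set pb \<and> precedes (filter (\<lambda>x. x \<notin> set pa) ord) u v)"
        using disj precedes_filter[of "\<lambda>x. x \<notin> set pa" u v ord] by blast
    qed
    then show ?thesis unfolding fb .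
  qed
  show ?thesis
    unfolding cnt_Un_left[OF disj] cnt_Un_right[OF disj] ca cb Xc_def by simp
qed

end


theorem theorem1:
  fixes pa pb :: "'a list" and Y :: "'a \<Rightarrow> bool"
  assumes "distinct pa" and "distinct pb" and "set pa \<inter> set pb = {}"
    and "npos Y pa \<ge> 1" and "nneg Y pa \<ge> 1" and "npos Y pb \<ge> 1" and "nneg Y pb \<ge> 1"
  shows "xOrder 0 Y pa pb \<in> shuffles pa pb
    \<and> (\<forall>ord \<in> shuffles pa pb. AUC Y pa pb ord \<le> AUC Y pa pb (xOrder 0 Y pa pb)
                            \<and> J 0 Y pa pb ord \<le> J 0 Y pa pb (xOrder 0 Y pa pb))"
proof -
  have dp: "xOrder 0 Y pa pb \<in> shuffles pa pb \<and>
     (\<forall>q \<in> shuffles pa pb. Xc Y pa pb q \<le> Xc Y pa pb (xOrder 0 Y pa pb))"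
    using DP[OF assms, of "length pa" "length pb"] unfolding xOrder_def by simp
  have den: "real (npos Y pa + npos Y pb) * real (nneg Y pa + nneg Y pb) > 0"
    using assms by simp
  have auc: "AUC Y pa pb ord \<le> AUC Y pa pb (xOrder 0 Y pa pb)" if o: "ord \<in> shuffles pa pb" for ord
  proof -
    have "cnt Y (set pa \<union> set pb) (set pa \<union> set pb) ord
        \<le> cnt Y (set pa \<union> set pb) (set pa \<union> set pb) (xOrder 0 Y pa pb)"
      unfolding cnt_total[OF assms o] cnt_total[OF assms conjunct1[OF dp]]
      using dp o by simp
    then show ?thesis unfolding AUC_def using den
      by (intro divide_right_mono) auto
  qed
  show ?thesis using dp auc unfolding J_def by simp
qed

end
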